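(* Let $q$ be a prime power, $\ell\geq 1$, and let $\mathcal{A}$ be a central hyperplane arrangement in $\mathbb{F}_q^\ell$. The following are equivalent: (a) $\mathcal{A}=\mathcal{A}_{all}(\mathbb{F}_q^\ell)$; (b) $|\mathcal{A}|=\frac{q^\ell-1}{q-1}$; (c) $\chi(\mathcal{A},t)=(t-1)(t-q)\cdots(t-q^{\ell-1})$; (d) $\chi(\mathcal{A},q^{\ell-1})=0$.
   Context: A (central) hyperplane arrangement $\mathcal{A}$ in a vector space $V$ over a field $\mathbb{K}$ is a finite set of linear subspaces of codimension one. $\mathcal{A}_{all}(V)$ denotes the arrangement consisting of all hyperplanes (codimension-one linear subspaces) of $V$ when $V$ is a vector space over a finite field. $L(\mathcal{A})$ denotes the set of all intersections of subsets of $\mathcal{A}$ (including $V$ itself), ordered by reverse inclusion, with minimal element $\hat 0=V$. The Möbius function $\mu$ on $L(\mathcal{A})$ is defined by $\mu(\hat0)=1$ and $\mu(X)=-\sum_{Y<X}\mu(Y)$ for $X>\hat0$. The characteristic polynomial is $\chi(\mathcal{A},t)=\sum_{X\in L(\mathcal{A})}\mu(X)t^{\dim X}$. *)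

theory Defs
  imports "HOL-Analysis.Analysis" "HOL-Computational_Algebra.Polynomial"
begin

(* The ambient space is  'a^'n  with 'a a finite field (so q = CARD('a) is a prime power)
   and  ell = CARD('n). *)

definition hyperplane :: "('a::field ^ 'n) set \<Rightarrow> bool" where
  "hyperplane H \<longleftrightarrow> vec.subspace H \<and> vec.dim H = CARD('n) - 1"

definition arrangement :: "('a::field ^ 'n) set set \<Rightarrow> bool" where
  "arrangement A \<longleftrightarrow> finite A \<and> (\<forall>H\<in>A. hyperplane H)"

definition A_all :: "('a::field ^ 'n) set set" where
  "A_all = {H. hyperplane H}"

(* intersection lattice: intersections of subsets of A; the empty intersection is V = UNIV *)
definition intersection_lattice :: "'v set set \<Rightarrow> 'v set set" where
  "intersection_lattice A = {\<Inter> B | B. B \<subseteq> A}"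

(* Moebius function of L ordered by reverse inclusion, with bottom element UNIV:
   mu(UNIV) = 1, mu(X) = - sum_{Y in L, Y < X} mu(Y), where Y < X means X \<subset> Y. *)
function mobius :: "('v::finite) set set \<Rightarrow> 'v set \<Rightarrow> int" where
  "mobius L X = (if X = UNIV then 1 else - (\<Sum>Y\<in>{Y\<in>L. X \<subset> Y}. mobius L Y))"
  by auto
termination
proof (relation "Wellfounded.measure (\<lambda>(L, X). card (UNIV - X))")
  fix L :: "'v::finite set set" and X Y :: "'v set"
  assume "X \<noteq> UNIV" "Y \<in> {Y \<in> L. X \<subset> Y}"
  then have "UNIV - Y \<subset> UNIV - X" by auto
  then show "((L, Y), (L, X)) \<in> Wellfounded.measure (\<lambda>(L, X). card (UNIV - X))"
    using psubset_card_mono[OF finite, of "UNIV - Y" "UNIV - X"] by simp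
qed auto

definition char_poly :: "('a::{finite,field} ^ 'n) set set \<Rightarrow> int poly" where
  "char_poly A = (\<Sum>X\<in>intersection_lattice A.
      monom (mobius (intersection_lattice A) X) (vec.dim X))"

end

theory Submission
  imports Defs
begin



declare mobius.simps[simp del]

lemma card_subspace:
  fixes X :: "('a::{finite,field}^'n) set"
  assumes "vec.subspace X"
  shows "card X = CARD('a) ^ vec.dim X"
proof -
  obtain B where B: "B \<subseteq> X" "vec.independent B" "X \<subseteq> vec.span B" "card B = vec.dim X"
    using vec.basis_exists by blast
  have fB: "finite B" by simp
  have spB: "vec.span B = X" using B assms vec.span_subspace by blast
  define f where "f = (\<lambda>c. \<Sum>v\<in>B. c v *s v)"
  have "bij_betw f (PiE B (\<lambda>_. UNIV :: 'a set)) X"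
  proof (rule bij_betwI')
    fix c d assume c: "c \<in> PiE B (\<lambda>_. UNIV :: 'a set)" and d: "d \<in> PiE B (\<lambda>_. UNIV :: 'a set)"
    show "(f c = f d) = (c = d)"
    proof
      assume "f c = f d"
      then have "(\<Sum>v\<in>B. (c v - d v) *s v) = 0"
        by (simp add: f_def vec.scale_left_diff_distrib sum_subtractf)
      then have "\<forall>v\<in>B. c v - d v = 0"
        using B(2) unfolding vec.independent_explicit
        by (elim conjE allE[of _ "\<lambda>v. c v - d v"]) simp
      then show "c = d" using c d by (intro PiE_ext) auto
    qed simp
  next
    fix c assume "c \<in> PiE B (\<lambda>_. UNIV :: 'a set)"
    show "f c \<in> X" unfolding f_def using spB[symmetric] vec.span_finite[OF fB] by auto
  next
    fix y assume "y \<in> X"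
    then obtain u where "y = (\<Sum>v\<in>B. u v *s v)" using spB vec.span_finite[OF fB] by auto
    then show "\<exists>c\<in>PiE B (\<lambda>_. UNIV :: 'a set). y = f c"
      by (intro bexI[of _ "restrict u B"]) (auto simp: f_def)
  qed
  then have "card X = card (PiE B (\<lambda>_. UNIV :: 'a set))" by (simp add: bij_betw_same_card)
  also have "\<dots> = CARD('a) ^ card B" by (simp add: card_PiE fB)
  finally show ?thesis using B(4) by simp
qed

lemma mobius_UNIV: "mobius L UNIV = 1"
  by (subst mobius.simps) simp

lemma mobius_sum:
  fixes L :: "('v::finite) set set"
  assumes "Y \<in> L" "UNIV \<in> L"
  shows "(\<Sum>X\<in>{X\<in>L. Y \<subseteq> X}. mobius L X) = (if Y = UNIV then 1 else 0)"
proof (cases "Y = UNIV")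
  case True
  then have "{X\<in>L. Y \<subseteq> X} = {UNIV}" using assms by auto
  then show ?thesis using True by (simp add: mobius_UNIV)
next
  case False
  have fin: "finite {X\<in>L. Y \<subset> X}" by simp
  have eq: "{X\<in>L. Y \<subseteq> X} = insert Y {X\<in>L. Y \<subset> X}" using assms by auto
  have "mobius L Y = - (\<Sum>X\<in>{X\<in>L. Y \<subset> X}. mobius L X)"
    using False by (subst mobius.simps) simp
  then show ?thesis using False unfolding eq by (subst sum.insert[OF fin]) auto
qed

lemma L_UNIV: "UNIV \<in> intersection_lattice A"
  unfolding intersection_lattice_def by auto

lemma L_subspace:
  assumes "\<forall>H\<in>A. vec.subspace H" "X \<in> intersection_lattice A"
  shows "vec.subspace X"
  using assms unfolding intersection_lattice_def by (auto intro!: vec.subspace_Inter)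

lemma sum_if_card: "finite R \<Longrightarrow> (\<Sum>r\<in>R. if P r then 1 else 0 :: int) = int (card {r\<in>R. P r})"
  by (simp add: sum.inter_filter[symmetric])

lemma finite_field_method:
  fixes A :: "('a::{finite,field} ^ 'n) set set"
  assumes sub: "\<forall>H\<in>A. vec.subspace H" and prp: "\<forall>H\<in>A. H \<noteq> UNIV"
  shows "poly (char_poly A) (int CARD('a) ^ m) =
     int (card {r \<in> PiE {..<m} (\<lambda>_. UNIV :: ('a^'n) set). \<forall>H\<in>A. \<exists>j<m. r j \<notin> H})"
proof -
  define L where "L = intersection_lattice A"
  define R where "R = PiE {..<m} (\<lambda>_. UNIV :: ('a^'n) set)"
  define c where "c r = \<Inter>{H\<in>A. \<forall>j<m. r j \<in> H}" for r :: "nat \<Rightarrow> 'a^'n"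
  have finR: "finite R" unfolding R_def by (intro finite_PiE) auto
  have cL: "c r \<in> L" for r unfolding c_def L_def intersection_lattice_def
    by (rule CollectI, rule exI[of _ "{H\<in>A. \<forall>j<m. r j \<in> H}"]) simp
  have c_iff: "(\<forall>j<m. r j \<in> X) \<longleftrightarrow> c r \<subseteq> X" if XL: "X \<in> L" for r X
  proof
    assume "\<forall>j<m. r j \<in> X"
    moreover obtain B where "B \<subseteq> A" "X = \<Inter>B" using XL unfolding L_def intersection_lattice_def by auto
    ultimately show "c r \<subseteq> X" unfolding c_def by auto
  next
    assume "c r \<subseteq> X" then show "\<forall>j<m. r j \<in> X" unfolding c_def by blast
  qed
  have cU: "c r = UNIV \<longleftrightarrow> (\<forall>H\<in>A. \<exists>j<m. r j \<notin> H)" for r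
  proof
    assume cu: "c r = UNIV"
    show "\<forall>H\<in>A. \<exists>j<m. r j \<notin> H"
    proof (intro ballI, rule ccontr)
      fix H assume H: "H \<in> A" "\<not> (\<exists>j<m. r j \<notin> H)"
      then have "c r \<subseteq> H" unfolding c_def by blast
      with cu prp H(1) show False by blast
    qed
  next
    assume "\<forall>H\<in>A. \<exists>j<m. r j \<notin> H"
    then have "{H\<in>A. \<forall>j<m. r j \<in> H} = {}" by blast
    then show "c r = UNIV" unfolding c_def by (metis Inter_empty)
  qed
  have cardX: "(int CARD('a) ^ m) ^ vec.dim X = int (card {r\<in>R. \<forall>j<m. r j \<in> X})" if "X \<in> L" for X
  proof -
    have "{r\<in>R. \<forall>j<m. r j \<in> X} = PiE {..<m} (\<lambda>_. X)" unfolding R_def by (auto simp: PiE_iff extensional_def)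
    then have "card {r\<in>R. \<forall>j<m. r j \<in> X} = card X ^ m" by (simp add: card_PiE)
    moreover have "card X = CARD('a) ^ vec.dim X"
      using card_subspace[OF L_subspace[OF sub, of X]] that unfolding L_def by simp
    ultimately show ?thesis by (simp add: power_mult[symmetric] mult.commute)
  qed
  have "poly (char_poly A) (int CARD('a) ^ m) = (\<Sum>X\<in>L. mobius L X * (int CARD('a) ^ m) ^ vec.dim X)"
    unfolding char_poly_def L_def by (simp add: poly_sum poly_monom)
  also have "\<dots> = (\<Sum>X\<in>L. mobius L X * (\<Sum>r\<in>R. if \<forall>j<m. r j \<in> X then 1 else 0))"
    using cardX finR by (intro sum.cong refl) (simp add: sum_if_card)
  also have "\<dots> = (\<Sum>X\<in>L. \<Sum>r\<in>R. if \<forall>j<m. r j \<in> X then mobius L X else 0)"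
    by (intro sum.cong refl) (simp add: sum_distrib_left, intro sum.cong refl, auto)
  also have "\<dots> = (\<Sum>r\<in>R. \<Sum>X\<in>L. if \<forall>j<m. r j \<in> X then mobius L X else 0)"
    by (rule sum.swap)
  also have "\<dots> = (\<Sum>r\<in>R. \<Sum>X\<in>L. if c r \<subseteq> X then mobius L X else 0)"
    by (intro sum.cong refl) (simp add: c_iff)
  also have "\<dots> = (\<Sum>r\<in>R. if c r = UNIV then 1 else 0)"
  proof (intro sum.cong refl)
    fix r
    have "(\<Sum>X\<in>L. if c r \<subseteq> X then mobius L X else 0) = (\<Sum>X\<in>{X\<in>L. c r \<subseteq> X}. mobius L X)"
      by (rule sum.inter_filter[symmetric]) simp
    also have "\<dots> = (if c r = UNIV then 1 else 0)"
      using mobius_sum[OF cL[of r], unfolded L_def, OF L_UNIV] unfolding L_def by simp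
    finally show "(\<Sum>X\<in>L. if c r \<subseteq> X then mobius L X else 0) = (if c r = UNIV then 1 else 0)" .
  qed
  also have "\<dots> = int (card {r\<in>R. c r = UNIV})"
    using finR by (rule sum_if_card)
  finally show ?thesis unfolding R_def cU .
qed



lemma dim_UNIV_vec: "vec.dim (UNIV :: ('a::field^'n) set) = CARD('n)"
  by (simp add: card_cart_basis)

lemma dim_le_vec: "vec.dim (X :: ('a::field^'n) set) \<le> CARD('n)"
  using vec.dim_subset[of X UNIV] dim_UNIV_vec by (metis subset_UNIV)

lemma hyperplane_ne_UNIV:
  assumes "hyperplane (H :: ('a::field^'n) set)" shows "H \<noteq> UNIV"
proof
  assume "H = UNIV"
  then have "CARD('n) - 1 = CARD('n)" using assms dim_UNIV_vec[where 'a='a and 'n='n]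
    unfolding hyperplane_def by simp
  moreover have "CARD('n) > 0" by simp
  ultimately show False by (metis diff_less less_irrefl zero_less_one)
qed

lemma extend_to_basis:
  fixes W :: "('a::field^'n) set"
  assumes "vec.subspace W" "v \<notin> W"
  obtains B C where "B \<subseteq> W" "W \<subseteq> vec.span B" "vec.independent C" "insert v B \<subseteq> C"
     "vec.span C = UNIV" "card C = CARD('n)" "finite C" "v \<notin> B"
proof -
  obtain B where B: "B \<subseteq> W" "vec.independent B" "W \<subseteq> vec.span B" "card B = vec.dim W"
    using vec.basis_exists by blast
  have spB: "vec.span B = W" using B assms(1) vec.span_subspace by blast
  have vB: "v \<notin> B" using B(1) assms(2) by blast
  have "vec.independent (insert v B)"
    using B(2) assms(2) spB vB by (simp add: vec.independent_insert)
  then obtain C where C: "insert v B \<subseteq> C" "vec.independent C" "UNIV \<subseteq> vec.span C"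
    using vec.maximal_independent_subset_extend[of "insert v B" UNIV] by auto
  have spC: "vec.span C = UNIV" using C(3) by auto
  have fC: "finite C" using C(2) vec.finiteI_independent by blast
  have "card C = CARD('n)"
    using vec.dim_span_eq_card_independent[OF C(2)] spC dim_UNIV_vec[where 'a='a and 'n='n] by simp
  then show ?thesis using that B C spC fC assms(2) by blast
qed

lemma proper_subspace_in_hyperplane:
  fixes W :: "('a::field^'n) set"
  assumes "vec.subspace W" "W \<noteq> UNIV"
  shows "\<exists>H. hyperplane H \<and> W \<subseteq> H"
proof -
  obtain v where v: "v \<notin> W" using assms(2) by auto
  obtain B C where BC: "B \<subseteq> W" "W \<subseteq> vec.span B" "vec.independent C" "insert v B \<subseteq> C"
     "vec.span C = UNIV" "card C = CARD('n)" "finite C" "v \<notin> B"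
    using extend_to_basis[OF assms(1) v] by blast
  define H where "H = vec.span (C - {v})"
  have ind: "vec.independent (C - {v})" using BC(3) vec.independent_mono by blast
  have "vec.dim H = card (C - {v})" unfolding H_def using vec.dim_span_eq_card_independent[OF ind] .
  also have "\<dots> = CARD('n) - 1" using BC(4,6,7) by simp
  finally have "hyperplane H" unfolding hyperplane_def H_def by simp
  moreover have "W \<subseteq> H" unfolding H_def using BC(1,2,4,8) vec.span_mono[of B "C - {v}"] by blast
  ultimately show ?thesis by blast
qed

lemma vec_expansion: "x = (\<Sum>i\<in>UNIV. (x $ i) *s axis i (1::'a::field))"
  by (simp add: vec_eq_iff axis_def sum_component if_distrib sum.delta cong: if_cong)

lemma representation_lin:
  fixes C :: "('a::field^'n) set"
  assumes "vec.independent C" "vec.span C = UNIV"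
  shows "vec.representation C (\<Sum>i\<in>I. c i *s y i) v = (\<Sum>i\<in>I. c i * vec.representation C (y i) v)"
  using assms by (simp add: vec.representation_sum vec.representation_scale)

lemma hyperplane_functional:
  fixes H :: "('a::field^'n) set"
  assumes "hyperplane H"
  shows "\<exists>\<alpha>. (\<exists>i. \<alpha> i \<noteq> 0) \<and> (\<forall>x\<in>H. (\<Sum>i\<in>UNIV. \<alpha> i * x $ i) = 0)"
proof -
  have subH: "vec.subspace H" using assms unfolding hyperplane_def by blast
  obtain v where v: "v \<notin> H" using hyperplane_ne_UNIV[OF assms] by auto
  obtain B C where BC: "B \<subseteq> H" "H \<subseteq> vec.span B" "vec.independent C" "insert v B \<subseteq> C"
     "vec.span C = UNIV" "card C = CARD('n)" "finite C" "v \<notin> B"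
    using extend_to_basis[OF subH v] by blast
  define \<phi> where "\<phi> x = vec.representation C x v" for x
  define \<alpha> where "\<alpha> i = \<phi> (axis i 1)" for i
  note lin = representation_lin[OF BC(3,5), of _ _ _ v, folded \<phi>_def]
  have phi_exp: "\<phi> x = (\<Sum>i\<in>UNIV. \<alpha> i * x $ i)" for x
    using lin[of "\<lambda>i. x $ i" "\<lambda>i. axis i 1" UNIV] vec_expansion[of x, symmetric]
    unfolding \<alpha>_def by (simp add: mult.commute)
  have phiv: "\<phi> v = 1" unfolding \<phi>_def using vec.representation_basis[OF BC(3)] BC(4) by auto
  have phiB: "\<phi> b = 0" if "b \<in> B" for b
    unfolding \<phi>_def using vec.representation_basis[OF BC(3)] BC(4,8) that by auto
  have "\<phi> h = 0" if "h \<in> H" for h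
  proof -
    have "B \<subseteq> C" using BC(4) by simp
    then have fB: "finite B" using BC(7) by (rule finite_subset)
    have "h \<in> vec.span B" using BC(2) that by (rule subsetD)
    then obtain u where hu: "h = (\<Sum>b\<in>B. u b *s b)" unfolding vec.span_finite[OF fB] by blast
    have "\<phi> h = (\<Sum>b\<in>B. u b * \<phi> b)" unfolding hu by (rule lin)
    also have "\<dots> = 0" using phiB by simp
    finally show ?thesis .
  qed
  moreover have "\<exists>i. \<alpha> i \<noteq> 0"
  proof (rule ccontr)
    assume "\<not> (\<exists>i. \<alpha> i \<noteq> 0)"
    then have "\<phi> v = 0" using phi_exp[of v] by simp
    then show False using phiv by simp
  qed
  ultimately show ?thesis using phi_exp by metis
qed



definition Tset :: "nat \<Rightarrow> 'i set \<Rightarrow> ('i \<Rightarrow> nat \<Rightarrow> 'a::field) set" where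
  "Tset m I = {x \<in> PiE I (\<lambda>_. PiE {..<m} (\<lambda>_. UNIV)).
      \<forall>\<alpha>. (\<exists>i\<in>I. \<alpha> i \<noteq> 0) \<longrightarrow> (\<exists>j<m. (\<Sum>i\<in>I. \<alpha> i * x i j) \<noteq> 0)}"

definition Sspan :: "nat \<Rightarrow> 'i set \<Rightarrow> ('i \<Rightarrow> nat \<Rightarrow> 'a::field) \<Rightarrow> (nat \<Rightarrow> 'a) set" where
  "Sspan m I x = (\<lambda>\<beta>. restrict (\<lambda>j. \<Sum>i\<in>I. \<beta> i * x i j) {..<m}) ` PiE I (\<lambda>_. UNIV)"

lemma Tset_D: "x \<in> Tset m I \<Longrightarrow> \<exists>i\<in>I. \<alpha> i \<noteq> 0 \<Longrightarrow> \<exists>j<m. (\<Sum>i\<in>I. \<alpha> i * x i j) \<noteq> 0"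
  unfolding Tset_def by blast

lemma Tset_P: "x \<in> Tset m I \<Longrightarrow> x \<in> PiE I (\<lambda>_. PiE {..<m} (\<lambda>_. UNIV))"
  unfolding Tset_def by blast

lemma card_Sspan:
  fixes x :: "'i \<Rightarrow> nat \<Rightarrow> 'a::{finite,field}"
  assumes "finite I" "x \<in> Tset m I"
  shows "card (Sspan m I x) = CARD('a) ^ card I"
proof -
  have "inj_on (\<lambda>\<beta>. restrict (\<lambda>j. \<Sum>i\<in>I. \<beta> i * x i j) {..<m}) (PiE I (\<lambda>_. UNIV))"
  proof (rule inj_onI)
    fix \<beta> \<gamma> assume b: "\<beta> \<in> PiE I (\<lambda>_. UNIV)" and g: "\<gamma> \<in> PiE I (\<lambda>_. UNIV)"
      and eq: "restrict (\<lambda>j. \<Sum>i\<in>I. \<beta> i * x i j) {..<m} = restrict (\<lambda>j. \<Sum>i\<in>I. \<gamma> i * x i j) {..<m}"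
    have z: "(\<Sum>i\<in>I. (\<beta> i - \<gamma> i) * x i j) = 0" if "j < m" for j
    proof -
      have "(\<Sum>i\<in>I. \<beta> i * x i j) = (\<Sum>i\<in>I. \<gamma> i * x i j)"
        using fun_cong[OF eq, of j] that by simp
      then show ?thesis by (simp add: algebra_simps sum_subtractf)
    qed
    have "\<forall>i\<in>I. \<beta> i - \<gamma> i = 0"
    proof (rule ccontr)
      assume "\<not> (\<forall>i\<in>I. \<beta> i - \<gamma> i = 0)"
      then have "\<exists>i\<in>I. \<beta> i - \<gamma> i \<noteq> 0" by blast
      then have "\<exists>j<m. (\<Sum>i\<in>I. (\<beta> i - \<gamma> i) * x i j) \<noteq> 0"
        by (rule Tset_D[OF assms(2)])
      then show False using z by blast
    qed
    then show "\<beta> = \<gamma>" using b g by (intro PiE_ext) auto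
  qed
  then have "card (Sspan m I x) = card (PiE I (\<lambda>_. UNIV :: 'a set))"
    unfolding Sspan_def by (rule card_image)
  also have "\<dots> = CARD('a) ^ card I" using assms(1) by (simp add: card_PiE)
  finally show ?thesis .
qed

lemma Sspan_sub: "Sspan m I x \<subseteq> PiE {..<m} (\<lambda>_. UNIV)"
  unfolding Sspan_def by (rule image_subsetI) (simp only: restrict_PiE_iff, simp)

lemma Tset_empty: "Tset m {} = {\<lambda>_. undefined}"
  unfolding Tset_def by auto

lemma Tset_restrict:
  fixes x :: "'i \<Rightarrow> nat \<Rightarrow> 'a::field"
  assumes "i0 \<notin> I" "finite I" "x \<in> Tset m (insert i0 I)"
  shows "restrict x I \<in> Tset m I"
proof -
  note xP = Tset_P[OF assms(3)]
  note xT = Tset_D[OF assms(3)]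
  show ?thesis
    unfolding Tset_def
  proof (intro CollectI conjI allI impI)
    show "restrict x I \<in> PiE I (\<lambda>_. PiE {..<m} (\<lambda>_. UNIV))" using xP by auto
  next
    fix \<alpha> :: "'i \<Rightarrow> 'a" assume "\<exists>i\<in>I. \<alpha> i \<noteq> 0"
    then obtain i where i: "i \<in> I" "\<alpha> i \<noteq> 0" by blast
    have "i \<noteq> i0" using i assms(1) by blast
    then have "\<exists>i\<in>insert i0 I. (\<alpha>(i0 := 0)) i \<noteq> 0" using i by auto
    then obtain j where j: "j < m" "(\<Sum>i\<in>insert i0 I. (\<alpha>(i0 := 0)) i * x i j) \<noteq> 0"
      using xT by blast
    have "(\<Sum>i\<in>insert i0 I. (\<alpha>(i0 := 0)) i * x i j) = (\<Sum>i\<in>I. (\<alpha>(i0 := 0)) i * x i j)"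
      using assms(1,2) by simp
    also have "\<dots> = (\<Sum>i\<in>I. \<alpha> i * restrict x I i j)"
      using assms(1) by (intro sum.cong refl) auto
    finally show "\<exists>j<m. (\<Sum>i\<in>I. \<alpha> i * restrict x I i j) \<noteq> 0" using j by auto
  qed
qed

lemma Tset_notin_span:
  fixes x :: "'i \<Rightarrow> nat \<Rightarrow> 'a::field"
  assumes "i0 \<notin> I" "finite I" "x \<in> Tset m (insert i0 I)"
  shows "x i0 \<notin> Sspan m I (restrict x I)"
proof
  assume "x i0 \<in> Sspan m I (restrict x I)"
  then obtain \<beta> where b: "x i0 = restrict (\<lambda>j. \<Sum>i\<in>I. \<beta> i * restrict x I i j) {..<m}"
    unfolding Sspan_def by blast
  note xT = Tset_D[OF assms(3)]
  have "\<exists>i\<in>insert i0 I. (\<beta>(i0 := -1)) i \<noteq> 0" by simp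
  then obtain j where j: "j < m" "(\<Sum>i\<in>insert i0 I. (\<beta>(i0 := -1)) i * x i j) \<noteq> 0"
    using xT by blast
  have "(\<Sum>i\<in>insert i0 I. (\<beta>(i0 := -1)) i * x i j) = - x i0 j + (\<Sum>i\<in>I. (\<beta>(i0 := -1)) i * x i j)"
    using assms(1,2) by simp
  also have "(\<Sum>i\<in>I. (\<beta>(i0 := -1)) i * x i j) = (\<Sum>i\<in>I. \<beta> i * restrict x I i j)"
    using assms(1) by (intro sum.cong refl) auto
  also have "\<dots> = x i0 j" using b j(1) by simp
  finally show False using j(2) by simp
qed

lemma Tset_upd:
  fixes x :: "'i \<Rightarrow> nat \<Rightarrow> 'a::field"
  assumes "i0 \<notin> I" "finite I" "x \<in> Tset m I" "y \<in> PiE {..<m} (\<lambda>_. UNIV)" "y \<notin> Sspan m I x"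
  shows "x(i0 := y) \<in> Tset m (insert i0 I)"
  unfolding Tset_def
proof (intro CollectI conjI allI impI)
  note xP = Tset_P[OF assms(3)]
  show "x(i0 := y) \<in> PiE (insert i0 I) (\<lambda>_. PiE {..<m} (\<lambda>_. UNIV))"
    using xP assms(4) by (rule PiE_fun_upd[rotated])
next
  fix \<alpha> :: "'i \<Rightarrow> 'a" assume a: "\<exists>i\<in>insert i0 I. \<alpha> i \<noteq> 0"
  have sumI: "(\<Sum>i\<in>insert i0 I. \<alpha> i * (x(i0 := y)) i j) = \<alpha> i0 * y j + (\<Sum>i\<in>I. \<alpha> i * x i j)" for j
  proof -
    have "(\<Sum>i\<in>insert i0 I. \<alpha> i * (x(i0 := y)) i j) = \<alpha> i0 * y j + (\<Sum>i\<in>I. \<alpha> i * (x(i0 := y)) i j)"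
      using assms(1,2) by simp
    also have "(\<Sum>i\<in>I. \<alpha> i * (x(i0 := y)) i j) = (\<Sum>i\<in>I. \<alpha> i * x i j)"
      using assms(1) by (intro sum.cong refl) auto
    finally show ?thesis .
  qed
  show "\<exists>j<m. (\<Sum>i\<in>insert i0 I. \<alpha> i * (x(i0 := y)) i j) \<noteq> 0"
  proof (cases "\<alpha> i0 = 0")
    case True
    then have "\<exists>i\<in>I. \<alpha> i \<noteq> 0" using a by auto
    then obtain j where "j < m" "(\<Sum>i\<in>I. \<alpha> i * x i j) \<noteq> 0" using Tset_D[OF assms(3)] by blast
    then show ?thesis using True sumI by auto
  next
    case False
    show ?thesis
    proof (rule ccontr)
      assume "\<not> (\<exists>j<m. (\<Sum>i\<in>insert i0 I. \<alpha> i * (x(i0 := y)) i j) \<noteq> 0)"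
      then have z: "\<alpha> i0 * y j + (\<Sum>i\<in>I. \<alpha> i * x i j) = 0" if "j < m" for j
        using sumI that by auto
      define \<beta> where "\<beta> = restrict (\<lambda>i. - \<alpha> i / \<alpha> i0) I"
      have "y = restrict (\<lambda>j. \<Sum>i\<in>I. \<beta> i * x i j) {..<m}"
      proof (rule ext)
        fix j show "y j = restrict (\<lambda>j. \<Sum>i\<in>I. \<beta> i * x i j) {..<m} j"
        proof (cases "j < m")
          case True
          have "(\<Sum>i\<in>I. \<beta> i * x i j) = (\<Sum>i\<in>I. (- \<alpha> i / \<alpha> i0) * x i j)"
            unfolding \<beta>_def by (intro sum.cong refl) auto
          also have "\<dots> = - (\<Sum>i\<in>I. \<alpha> i * x i j) / \<alpha> i0"
            by (simp add: sum_divide_distrib sum_negf)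
          also have "\<dots> = y j"
          proof -
            have e: "\<alpha> i0 * y j = - (\<Sum>i\<in>I. \<alpha> i * x i j)"
              using z[OF True] by (simp add: eq_neg_iff_add_eq_0)
            have "y j = (\<alpha> i0 * y j) / \<alpha> i0" using False by simp
            also have "\<dots> = - (\<Sum>i\<in>I. \<alpha> i * x i j) / \<alpha> i0" using e by simp
            finally show ?thesis by simp
          qed
          finally show ?thesis using True by simp
        next
          case False
          then show ?thesis using assms(4) by (auto simp: PiE_def extensional_def)
        qed
      qed
      moreover have "\<beta> \<in> PiE I (\<lambda>_. UNIV)" unfolding \<beta>_def by simp
      ultimately have "y \<in> Sspan m I x" unfolding Sspan_def by blast
      then show False using assms(5) by blast
    qed
  qed
qed

lemma rt1: "x \<in> PiE (insert i0 I) K \<Longrightarrow> (restrict x I)(i0 := x i0) = x"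
  by (auto simp: fun_eq_iff PiE_def extensional_def)

lemma rt2: "i0 \<notin> I \<Longrightarrow> x \<in> PiE I K \<Longrightarrow> restrict (x(i0:=y)) I = x"
  by (auto simp: fun_eq_iff PiE_def extensional_def)

lemma rt1': "x \<in> Tset m (insert i0 I) \<Longrightarrow> (restrict x I)(i0 := x i0) = x"
  by (rule rt1[OF Tset_P])

lemma rt2': "i0 \<notin> I \<Longrightarrow> x \<in> Tset m I \<Longrightarrow> restrict (x(i0:=y)) I = x"
  by (rule rt2[OF _ Tset_P])

lemma card_Tset:
  assumes "finite I"
  shows "card (Tset m I :: ('i \<Rightarrow> nat \<Rightarrow> 'a::{finite,field}) set) = (\<Prod>k<card I. CARD('a) ^ m - CARD('a) ^ k)"
  using assms
proof (induction I rule: finite_induct)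
  case empty
  then show ?case by (simp add: Tset_empty)
next
  case (insert i0 I)
  let ?K = "PiE {..<m} (\<lambda>_. UNIV :: 'a set)"
  have bij: "bij_betw (\<lambda>x. (restrict x I, x i0)) (Tset m (insert i0 I) :: ('i \<Rightarrow> nat \<Rightarrow> 'a) set)
           (Sigma (Tset m I) (\<lambda>x. ?K - Sspan m I x))"
    apply (rule bij_betw_byWitness[where f'="\<lambda>(x, y). x(i0 := y)"])
    subgoal
    proof
      fix x :: "'i \<Rightarrow> nat \<Rightarrow> 'a" assume x: "x \<in> Tset m (insert i0 I)"
      show "(\<lambda>(x, y). x(i0 := y)) (restrict x I, x i0) = x"
        by (simp only: prod.case) (rule rt1'[OF x])
    qed
    subgoal
    proof
      fix p assume "p \<in> Sigma (Tset m I) (\<lambda>x. ?K - Sspan m I x)"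
      then obtain x y where p: "p = (x, y)" "x \<in> Tset m I" by blast
      show "(restrict ((\<lambda>(x, y). x(i0 := y)) p) I, (\<lambda>(x, y). x(i0 := y)) p i0) = p"
        unfolding p(1) prod.case using rt2'[OF insert.hyps(2) p(2), of y] by simp
    qed
    subgoal
    proof (rule image_subsetI)
      fix x :: "'i \<Rightarrow> nat \<Rightarrow> 'a" assume x: "x \<in> Tset m (insert i0 I)"
      show "(restrict x I, x i0) \<in> Sigma (Tset m I) (\<lambda>x. ?K - Sspan m I x)"
        using Tset_restrict[OF insert.hyps(2,1) x] Tset_notin_span[OF insert.hyps(2,1) x]
          PiE_mem[OF Tset_P[OF x], of i0] by blast
    qed
    subgoal
    proof (rule image_subsetI)
      fix p assume "p \<in> Sigma (Tset m I) (\<lambda>x. ?K - Sspan m I x)"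
      then obtain x y where p: "p = (x, y)" "x \<in> Tset m I" "y \<in> ?K" "y \<notin> Sspan m I x" by blast
      show "(\<lambda>(x, y). x(i0 := y)) p \<in> Tset m (insert i0 I)"
        unfolding p(1) using Tset_upd[OF insert.hyps(2,1) p(2-4)] by simp
    qed
    done
  have finK: "finite ?K" by (intro finite_PiE) auto
  have finT: "finite (Tset m I :: ('i \<Rightarrow> nat \<Rightarrow> 'a) set)"
  proof (rule finite_subset)
    show "Tset m I \<subseteq> PiE I (\<lambda>_. ?K)" unfolding Tset_def by blast
    show "finite (PiE I (\<lambda>_. ?K))" using insert.hyps(1) by (intro finite_PiE) auto
  qed
  have "card (Tset m (insert i0 I) :: ('i \<Rightarrow> nat \<Rightarrow> 'a) set) = card (Sigma (Tset m I) (\<lambda>x. ?K - Sspan m I x))"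
    using bij by (rule bij_betw_same_card)
  also have "\<dots> = (\<Sum>x\<in>Tset m I. card (?K - Sspan m I x))"
    using finT finK by (subst card_SigmaI) auto
  also have "\<dots> = (\<Sum>x\<in>(Tset m I :: ('i \<Rightarrow> nat \<Rightarrow> 'a) set). CARD('a) ^ m - CARD('a) ^ card I)"
  proof (intro sum.cong refl)
    fix x :: "'i \<Rightarrow> nat \<Rightarrow> 'a" assume x: "x \<in> Tset m I"
    have "card (?K - Sspan m I x) = card ?K - card (Sspan m I x)"
      by (rule card_Diff_subset[OF finite_subset[OF Sspan_sub finK] Sspan_sub])
    also have "card ?K = CARD('a) ^ m" by (simp add: card_PiE)
    also have "card (Sspan m I x) = CARD('a) ^ card I" using card_Sspan[OF insert.hyps(1) x] .
    finally show "card (?K - Sspan m I x) = CARD('a) ^ m - CARD('a) ^ card I" .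
  qed
  also have "\<dots> = card (Tset m I :: ('i \<Rightarrow> nat \<Rightarrow> 'a) set) * (CARD('a) ^ m - CARD('a) ^ card I)" by simp
  also have "\<dots> = (\<Prod>k<card (insert i0 I). CARD('a) ^ m - CARD('a) ^ k)"
  proof -
    have c: "card (insert i0 I) = Suc (card I)" using insert.hyps by simp
    show ?thesis unfolding c prod.lessThan_Suc insert.IH by (simp add: mult.commute)
  qed
  finally show ?case .
qed



lemma subspace_ker: "vec.subspace {v::'a::field^'n. (\<Sum>i\<in>UNIV. \<alpha> i * v $ i) = 0}"
  unfolding vec.subspace_def
proof (intro conjI ballI allI)
  show "0 \<in> {v::'a^'n. (\<Sum>i\<in>UNIV. \<alpha> i * v $ i) = 0}" by simp
next
  fix x y :: "'a^'n" assume "x \<in> {v. (\<Sum>i\<in>UNIV. \<alpha> i * v $ i) = 0}" "y \<in> {v. (\<Sum>i\<in>UNIV. \<alpha> i * v $ i) = 0}"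
  then show "x + y \<in> {v. (\<Sum>i\<in>UNIV. \<alpha> i * v $ i) = 0}"
    by (simp add: distrib_left sum.distrib)
next
  fix c :: 'a and x :: "'a^'n" assume "x \<in> {v. (\<Sum>i\<in>UNIV. \<alpha> i * v $ i) = 0}"
  have "(\<Sum>i\<in>UNIV. \<alpha> i * (c *s x) $ i) = c * (\<Sum>i\<in>UNIV. \<alpha> i * x $ i)"
    by (simp add: sum_distrib_left mult.left_commute)
  then show "c *s x \<in> {v. (\<Sum>i\<in>UNIV. \<alpha> i * v $ i) = 0}"
    using \<open>x \<in> _\<close> by simp
qed

lemma key_equiv:
  fixes r :: "nat \<Rightarrow> 'a::field^'n"
  shows "(\<forall>H. hyperplane H \<longrightarrow> (\<exists>j<m. r j \<notin> H)) \<longleftrightarrow>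
         (\<forall>\<alpha>. (\<exists>i. \<alpha> i \<noteq> 0) \<longrightarrow> (\<exists>j<m. (\<Sum>i\<in>UNIV. \<alpha> i * r j $ i) \<noteq> 0))"
proof
  assume h: "\<forall>H. hyperplane H \<longrightarrow> (\<exists>j<m. r j \<notin> H)"
  show "\<forall>\<alpha>. (\<exists>i. \<alpha> i \<noteq> 0) \<longrightarrow> (\<exists>j<m. (\<Sum>i\<in>UNIV. \<alpha> i * r j $ i) \<noteq> 0)"
  proof (intro allI impI)
    fix \<alpha> :: "'n \<Rightarrow> 'a" assume "\<exists>i. \<alpha> i \<noteq> 0"
    then obtain i0 where i0: "\<alpha> i0 \<noteq> 0" by blast
    let ?W = "{v::'a^'n. (\<Sum>i\<in>UNIV. \<alpha> i * v $ i) = 0}"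
    have "(\<Sum>i\<in>UNIV. \<alpha> i * axis i0 (1::'a) $ i) = \<alpha> i0"
      by (simp add: axis_def if_distrib sum.delta cong: if_cong)
    then have "axis i0 1 \<notin> ?W" using i0 by simp
    then have "?W \<noteq> UNIV" by blast
    then obtain H where H: "hyperplane H" "?W \<subseteq> H"
      using proper_subspace_in_hyperplane[OF subspace_ker] by blast
    then obtain j where "j < m" "r j \<notin> H" using h by blast
    then show "\<exists>j<m. (\<Sum>i\<in>UNIV. \<alpha> i * r j $ i) \<noteq> 0" using H(2) by blast
  qed
next
  assume h: "\<forall>\<alpha>. (\<exists>i. \<alpha> i \<noteq> 0) \<longrightarrow> (\<exists>j<m. (\<Sum>i\<in>UNIV. \<alpha> i * r j $ i) \<noteq> 0)"
  show "\<forall>H. hyperplane H \<longrightarrow> (\<exists>j<m. r j \<notin> H)"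
  proof (intro allI impI)
    fix H :: "('a^'n) set" assume "hyperplane H"
    then obtain \<alpha> where a: "\<exists>i. \<alpha> i \<noteq> 0" "\<forall>x\<in>H. (\<Sum>i\<in>UNIV. \<alpha> i * x $ i) = 0"
      using hyperplane_functional by blast
    then obtain j where "j < m" "(\<Sum>i\<in>UNIV. \<alpha> i * r j $ i) \<noteq> 0" using h by blast
    then show "\<exists>j<m. r j \<notin> H" using a(2) by blast
  qed
qed

lemma count_all:
  "card {r \<in> PiE {..<m} (\<lambda>_. UNIV::('a::{finite,field}^'n) set). \<forall>H\<in>A_all. \<exists>j<m. r j \<notin> H}
     = (\<Prod>k<CARD('n). CARD('a) ^ m - CARD('a) ^ k)"
proof -
  let ?S = "{r \<in> PiE {..<m} (\<lambda>_. UNIV::('a^'n) set). \<forall>H\<in>A_all. \<exists>j<m. r j \<notin> H}"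
  let ?T = "Tset m (UNIV :: 'n set) :: ('n \<Rightarrow> nat \<Rightarrow> 'a) set"
  define tr where "tr r = (\<lambda>i. restrict (\<lambda>j. r j $ i) {..<m})" for r :: "nat \<Rightarrow> 'a^'n"
  define tr' where "tr' x = restrict (\<lambda>j. \<chi> i. x i j) {..<m}" for x :: "'n \<Rightarrow> nat \<Rightarrow> 'a"
  have Sc: "r \<in> ?S \<longleftrightarrow> r \<in> PiE {..<m} (\<lambda>_. UNIV) \<and>
      (\<forall>\<alpha>. (\<exists>i. \<alpha> i \<noteq> 0) \<longrightarrow> (\<exists>j<m. (\<Sum>i\<in>UNIV. \<alpha> i * r j $ i) \<noteq> 0))" for r
    using key_equiv[of m r] unfolding A_all_def by auto
  have Tc: "x \<in> ?T \<longleftrightarrow> x \<in> PiE UNIV (\<lambda>_. PiE {..<m} (\<lambda>_. UNIV)) \<and>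
      (\<forall>\<alpha>. (\<exists>i. \<alpha> i \<noteq> 0) \<longrightarrow> (\<exists>j<m. (\<Sum>i\<in>UNIV. \<alpha> i * x i j) \<noteq> 0))" for x
    unfolding Tset_def by simp
  have "bij_betw tr ?S ?T"
  proof (rule bij_betw_byWitness[where f'=tr'])
    show "\<forall>r\<in>?S. tr' (tr r) = r"
    proof
      fix r assume "r \<in> ?S"
      then have "r \<in> PiE {..<m} (\<lambda>_. UNIV)" by blast
      then show "tr' (tr r) = r" unfolding tr_def tr'_def
        by (auto simp: fun_eq_iff PiE_def extensional_def vec_eq_iff)
    qed
  next
    show "\<forall>x\<in>?T. tr (tr' x) = x"
    proof
      fix x assume "x \<in> ?T"
      then have "x \<in> PiE UNIV (\<lambda>_. PiE {..<m} (\<lambda>_. UNIV))" using Tc by blast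
      then have xi: "x i \<in> PiE {..<m} (\<lambda>_. UNIV)" for i by (rule PiE_mem) simp
      show "tr (tr' x) = x"
      proof (intro ext)
        fix i j show "tr (tr' x) i j = x i j"
        proof (cases "j < m")
          case True
          then show ?thesis unfolding tr_def tr'_def by simp
        next
          case False
          have "x i j = undefined" using xi[of i] by (rule PiE_arb) (simp add: False)
          then show ?thesis using False unfolding tr_def tr'_def by simp
        qed
      qed
    qed
  next
    show "tr ` ?S \<subseteq> ?T"
    proof (rule image_subsetI)
      fix r assume r: "r \<in> ?S"
      have e: "(\<Sum>i\<in>UNIV. \<alpha> i * tr r i j) = (\<Sum>i\<in>UNIV. \<alpha> i * r j $ i)" if "j < m" for \<alpha> j
        unfolding tr_def using that by simp
      show "tr r \<in> ?T" unfolding Tc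
      proof
        show "tr r \<in> PiE UNIV (\<lambda>_. PiE {..<m} (\<lambda>_. UNIV))" unfolding tr_def by (simp add: PiE_iff)
        show "\<forall>\<alpha>. (\<exists>i. \<alpha> i \<noteq> 0) \<longrightarrow> (\<exists>j<m. (\<Sum>i\<in>UNIV. \<alpha> i * tr r i j) \<noteq> 0)"
          using r[unfolded Sc] e by metis
      qed
    qed
  next
    show "tr' ` ?T \<subseteq> ?S"
    proof (rule image_subsetI)
      fix x assume x: "x \<in> ?T"
      have e: "(\<Sum>i\<in>UNIV. \<alpha> i * tr' x j $ i) = (\<Sum>i\<in>UNIV. \<alpha> i * x i j)" if "j < m" for \<alpha> j
        unfolding tr'_def using that by simp
      show "tr' x \<in> ?S" unfolding Sc
      proof
        show "tr' x \<in> PiE {..<m} (\<lambda>_. UNIV)" unfolding tr'_def by simp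
        show "\<forall>\<alpha>. (\<exists>i. \<alpha> i \<noteq> 0) \<longrightarrow> (\<exists>j<m. (\<Sum>i\<in>UNIV. \<alpha> i * tr' x j $ i) \<noteq> 0)"
          using x[unfolded Tc] e by metis
      qed
    qed
  qed
  then have "card ?S = card ?T" by (rule bij_betw_same_card)
  also have "\<dots> = (\<Prod>k<CARD('n). CARD('a) ^ m - CARD('a) ^ k)" by (rule card_Tset) simp
  finally show ?thesis .
qed



lemma card_field_ge2: "2 \<le> CARD('a::{finite,field})"
proof -
  have "card {0, 1::'a} \<le> card (UNIV :: 'a set)" by (rule card_mono) auto
  then show ?thesis by simp
qed

lemma arr_sub: "arrangement A \<Longrightarrow> \<forall>H\<in>A. vec.subspace H"
  unfolding arrangement_def hyperplane_def by blast

lemma arr_ne: "arrangement A \<Longrightarrow> \<forall>H\<in>A. H \<noteq> UNIV"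
  unfolding arrangement_def using hyperplane_ne_UNIV by blast

lemma dim_full_UNIV:
  fixes Y :: "('a::field^'n) set"
  assumes "vec.subspace Y" "vec.dim Y = CARD('n)"
  shows "Y = UNIV"
  using vec.subspace_dim_equal[of Y UNIV] assms dim_UNIV_vec[where 'a='a and 'n='n] by simp

lemma coeff_char:
  fixes A :: "('a::{finite,field} ^ 'n) set set"
  assumes arr: "arrangement A"
  shows "coeff (char_poly A) (CARD('n) - 1) = - int (card A)"
proof -
  define L where "L = intersection_lattice A"
  have sub: "\<forall>H\<in>A. vec.subspace H" using arr_sub[OF arr] .
  have hyp: "\<forall>H\<in>A. hyperplane H" using arr unfolding arrangement_def by blast
  have n0: "CARD('n) > 0" by simp
  have n1: "CARD('n) - 1 \<noteq> CARD('n)" using n0 by (metis diff_less less_irrefl zero_less_one)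
  have setA: "{X\<in>L. vec.dim X = CARD('n) - 1} = A"
  proof
    show "{X\<in>L. vec.dim X = CARD('n) - 1} \<subseteq> A"
    proof safe
      fix X assume X: "X \<in> L" "vec.dim X = CARD('n) - 1"
      then obtain B where B: "B \<subseteq> A" "X = \<Inter>B" unfolding L_def intersection_lattice_def by blast
      have Xs: "vec.subspace X" using L_subspace[OF sub] X(1) unfolding L_def by blast
      have "B \<noteq> {}"
      proof
        assume "B = {}"
        then have "X = UNIV" using B by simp
        then show False using X(2) dim_UNIV_vec[where 'a='a and 'n='n] n1 by simp
      qed
      then obtain H where H: "H \<in> B" by blast
      have "X \<subseteq> H" using B H by blast
      moreover have "vec.subspace H" "vec.dim H = CARD('n) - 1" using hyp B(1) H unfolding hyperplane_def by auto
      ultimately have "X = H" using vec.subspace_dim_equal[of X H] Xs X(2) by simp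
      then show "X \<in> A" using H B(1) by blast
    qed
  next
    show "A \<subseteq> {X\<in>L. vec.dim X = CARD('n) - 1}"
    proof
      fix H assume H: "H \<in> A"
      have "H = \<Inter>{H}" by simp
      then have "H \<in> L" unfolding L_def intersection_lattice_def using H by blast
      then show "H \<in> {X\<in>L. vec.dim X = CARD('n) - 1}" using hyp H unfolding hyperplane_def by simp
    qed
  qed
  have muH: "mobius L H = -1" if H: "H \<in> A" for H
  proof -
    have HU: "H \<noteq> UNIV" using arr_ne[OF arr] H by blast
    have "{Y\<in>L. H \<subset> Y} = {UNIV}"
    proof
      show "{UNIV} \<subseteq> {Y\<in>L. H \<subset> Y}" using HU L_UNIV[of A] unfolding L_def by auto
    next
      show "{Y\<in>L. H \<subset> Y} \<subseteq> {UNIV}"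
      proof (rule subsetI)
        fix Y assume "Y \<in> {Y\<in>L. H \<subset> Y}"
        then have Y: "Y \<in> L" "H \<subset> Y" by auto
        have Ys: "vec.subspace Y" using L_subspace[OF sub] Y(1) unfolding L_def by blast
        have "Y = UNIV"
        proof (rule ccontr)
          assume YU: "Y \<noteq> UNIV"
          have "vec.dim Y \<le> CARD('n)" by (rule dim_le_vec)
          moreover have "vec.dim Y \<noteq> CARD('n)" using dim_full_UNIV[OF Ys] YU by blast
          ultimately have "vec.dim Y \<le> vec.dim H" using hyp H unfolding hyperplane_def by simp
          moreover have "vec.subspace H" using sub H by blast
          ultimately have "H = Y" using vec.subspace_dim_equal[of H Y] Ys Y(2) by blast
          then show False using Y(2) by blast
        qed
        then show "Y \<in> {UNIV}" by simp
      qed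
    qed
    then show ?thesis using HU by (subst mobius.simps) (simp add: mobius_UNIV)
  qed
  have "coeff (char_poly A) (CARD('n) - 1) = (\<Sum>X\<in>L. if vec.dim X = CARD('n) - 1 then mobius L X else 0)"
    unfolding char_poly_def L_def by (simp add: coeff_sum coeff_monom)
  also have "\<dots> = (\<Sum>X\<in>{X\<in>L. vec.dim X = CARD('n) - 1}. mobius L X)"
    by (rule sum.inter_filter[symmetric]) simp
  also have "\<dots> = (\<Sum>X\<in>A. -1)" unfolding setA using muH by simp
  also have "\<dots> = - int (card A)" by simp
  finally show ?thesis .
qed

lemma coeff_prod_lin:
  fixes c :: "nat \<Rightarrow> int"
  shows "coeff (\<Prod>i<n. [:- c i, 1:]) n = 1 \<and> (\<forall>j>n. coeff (\<Prod>i<n. [:- c i, 1:]) j = 0) \<and>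
         coeff (\<Prod>i<Suc n. [:- c i, 1:]) n = - (\<Sum>i<Suc n. c i)"
proof (induction n)
  case 0
  then show ?case by (auto simp: coeff_1)
next
  case (Suc n)
  define P where "P = (\<Prod>i<n. [:- c i, 1:])"
  define Q where "Q = (\<Prod>i<Suc n. [:- c i, 1:])"
  have Q: "Q = P * [:- c n, 1:]" unfolding P_def Q_def by simp
  have cQ: "coeff Q (Suc k) = coeff P k - c n * coeff P (Suc k)" for k
    unfolding Q by (simp add: mult_pCons_right coeff_pCons)
  have IH1: "coeff P n = 1" and IH2: "\<forall>j>n. coeff P j = 0" and IH3: "coeff Q n = - (\<Sum>i<Suc n. c i)"
    using Suc.IH unfolding P_def Q_def by auto
  have R: "(\<Prod>i<Suc (Suc n). [:- c i, 1:]) = Q * [:- c (Suc n), 1:]" unfolding Q_def by simp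
  have cR: "coeff (Q * [:- c (Suc n), 1:]) (Suc k) = coeff Q k - c (Suc n) * coeff Q (Suc k)" for k
    by (simp add: mult_pCons_right coeff_pCons)
  have Q1: "coeff Q (Suc n) = 1" using cQ[of n] IH1 IH2 by simp
  have Q2: "\<forall>j>Suc n. coeff Q j = 0"
  proof (intro allI impI)
    fix j assume "j > Suc n"
    then obtain k where k: "j = Suc k" "k > n" by (cases j) auto
    then show "coeff Q j = 0" using cQ[of k] IH2 by simp
  qed
  have "coeff (\<Prod>i<Suc (Suc n). [:- c i, 1:]) (Suc n) = coeff Q n - c (Suc n) * coeff Q (Suc n)"
    unfolding R by (rule cR)
  also have "\<dots> = - (\<Sum>i<Suc (Suc n). c i)" using IH3 Q1 by simp
  finally show ?case using Q1 Q2 unfolding Q_def by simp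
qed

lemma gsum_nat:
  fixes q :: nat assumes "2 \<le> q"
  shows "(q ^ l - 1) div (q - 1) = (\<Sum>i<l. q ^ i)"
proof -
  have "(q - 1) * (\<Sum>i<l. q ^ i) = q ^ l - 1"
  proof (induction l)
    case 0 then show ?case by simp
  next
    case (Suc l)
    have "(q - 1) * (\<Sum>i<Suc l. q ^ i) = (q ^ l - 1) + (q - 1) * q ^ l"
      using Suc by (simp add: distrib_left)
    also have "\<dots> = q ^ Suc l - 1"
    proof -
      have "1 \<le> q ^ l" using assms by simp
      moreover have "q ^ l \<le> q * q ^ l" using assms by simp
      moreover have e1: "(q - 1) * q ^ l = q * q ^ l - q ^ l" by (simp add: diff_mult_distrib)
      moreover have e2: "q ^ Suc l = q * q ^ l" by simp
      ultimately show ?thesis by (simp only: e1 e2)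
    qed
    finally show ?case .
  qed
  then have "(q ^ l - 1) div (q - 1) = ((q - 1) * (\<Sum>i<l. q ^ i)) div (q - 1)" by simp
  also have "\<dots> = (\<Sum>i<l. q ^ i)" using assms by (intro nonzero_mult_div_cancel_left) simp
  finally show ?thesis .
qed



lemma arr_all: "arrangement (A_all :: ('a::{finite,field}^'n) set set)"
  unfolding arrangement_def A_all_def by simp

lemma char_all:
  "char_poly (A_all :: ('a::{finite,field}^'n) set set) = (\<Prod>i<CARD('n). [:- (int CARD('a) ^ i), 1:])"
proof -
  let ?q = "CARD('a)"
  define p where "p = char_poly (A_all :: ('a^'n) set set) - (\<Prod>i<CARD('n). [:- (int ?q ^ i), 1:])"
  have q2: "2 \<le> ?q" by (rule card_field_ge2)
  have root: "poly p (int ?q ^ m) = 0" if m: "m \<ge> CARD('n)" for m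
  proof -
    have "poly (char_poly (A_all :: ('a^'n) set set)) (int ?q ^ m)
        = int (card {r \<in> PiE {..<m} (\<lambda>_. UNIV :: ('a^'n) set). \<forall>H\<in>A_all. \<exists>j<m. r j \<notin> H})"
      using finite_field_method[OF arr_sub[OF arr_all] arr_ne[OF arr_all]] .
    also have "\<dots> = int (\<Prod>k<CARD('n). ?q ^ m - ?q ^ k)" by (simp only: count_all)
    also have "\<dots> = (\<Prod>k<CARD('n). int ?q ^ m - int ?q ^ k)"
    proof -
      have "?q ^ k \<le> ?q ^ m" if "k < CARD('n)" for k
        using that m q2 by (intro power_increasing) auto
      then show ?thesis by (simp add: of_nat_prod of_nat_diff)
    qed
    also have "\<dots> = poly (\<Prod>i<CARD('n). [:- (int ?q ^ i), 1:]) (int ?q ^ m)"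
      by (simp add: poly_prod)
    finally show ?thesis unfolding p_def by simp
  qed
  show ?thesis
  proof (rule ccontr)
    assume "\<not> ?thesis"
    then have "p \<noteq> 0" unfolding p_def by simp
    then have fin: "finite {x. poly p x = 0}" by (rule poly_roots_finite)
    have "(\<lambda>m. int ?q ^ m) ` {CARD('n)..} \<subseteq> {x. poly p x = 0}" using root by auto
    then have "finite ((\<lambda>m. int ?q ^ m) ` {CARD('n)..})" using fin by (rule finite_subset)
    moreover have "inj_on (\<lambda>m. int ?q ^ m) {CARD('n)..}"
    proof (rule inj_onI)
      fix a b assume "int ?q ^ a = int ?q ^ b"
      moreover have "1 < int ?q" using q2 by simp
      ultimately show "a = b" by (simp add: power_inject_exp)
    qed
    ultimately have "finite {CARD('n)..}" by (rule finite_imageD)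
    then show False using infinite_Ici by blast
  qed
qed

lemma dim_ff:
  fixes A :: "('a::{finite,field} ^ 'n) set set"
  assumes arr: "arrangement A" and ne: "A \<noteq> A_all"
  shows "poly (char_poly A) (int CARD('a) ^ (CARD('n) - 1)) \<noteq> 0"
proof -
  let ?l = "CARD('n) - 1"
  have sub: "A \<subseteq> A_all" using arr unfolding arrangement_def A_all_def by blast
  then obtain H0 where H0: "H0 \<in> A_all" "H0 \<notin> A" using ne by blast
  have hH0: "hyperplane H0" using H0 unfolding A_all_def by simp
  then have sH0: "vec.subspace H0" and dH0: "vec.dim H0 = ?l" unfolding hyperplane_def by auto
  obtain B where B: "B \<subseteq> H0" "vec.independent B" "H0 \<subseteq> vec.span B" "card B = vec.dim H0"
    using vec.basis_exists by blast
  have fB: "finite B" by simp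
  obtain e where e: "bij_betw e {0..<card B} B" using ex_bij_betw_nat_finite[OF fB] by blast
  define r where "r = restrict e {..<?l}"
  let ?S = "{r \<in> PiE {..<?l} (\<lambda>_. UNIV :: ('a^'n) set). \<forall>H\<in>A. \<exists>j<?l. r j \<notin> H}"
  have "r \<in> ?S"
  proof (intro CollectI conjI ballI)
    show "r \<in> PiE {..<?l} (\<lambda>_. UNIV)" unfolding r_def by simp
  next
    fix H assume H: "H \<in> A"
    show "\<exists>j<?l. r j \<notin> H"
    proof (rule ccontr)
      assume "\<not> (\<exists>j<?l. r j \<notin> H)"
      then have "\<forall>j<?l. e j \<in> H" unfolding r_def by simp
      moreover have "B = e ` {0..<?l}" using e B(4) dH0 by (simp add: bij_betw_def)
      ultimately have "B \<subseteq> H" by auto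
      moreover have sH: "vec.subspace H" using arr_sub[OF arr] H by blast
      ultimately have "vec.span B \<subseteq> H" by (rule vec.span_minimal)
      then have "H0 \<subseteq> H" using B(3) by blast
      moreover have "vec.dim H = ?l" using arr H unfolding arrangement_def hyperplane_def by auto
      ultimately have "H0 = H" using vec.subspace_dim_equal[of H0 H] sH0 sH dH0 by simp
      then show False using H H0(2) by blast
    qed
  qed
  moreover have "finite ?S"
  proof (rule finite_subset)
    show "?S \<subseteq> PiE {..<?l} (\<lambda>_. UNIV :: ('a^'n) set)" by blast
    show "finite (PiE {..<?l} (\<lambda>_. UNIV :: ('a^'n) set))" by (intro finite_PiE) auto
  qed
  ultimately have "card ?S > 0" using card_gt_0_iff by blast
  moreover have "poly (char_poly A) (int CARD('a) ^ ?l) = int (card ?S)"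
    using finite_field_method[OF arr_sub[OF arr] arr_ne[OF arr]] .
  ultimately show ?thesis by simp
qed

theorem mainTheorem3:
  fixes A :: "('a::{finite,field} ^ 'n) set set"
  assumes "arrangement A"
  defines "q \<equiv> CARD('a)" and "l \<equiv> CARD('n)"
  shows "(A = A_all \<longleftrightarrow> card A = (q ^ l - 1) div (q - 1))
       \<and> (card A = (q ^ l - 1) div (q - 1) \<longleftrightarrow> char_poly A = (\<Prod>i<l. [:- (int q ^ i), 1:]))
       \<and> (char_poly A = (\<Prod>i<l. [:- (int q ^ i), 1:]) \<longleftrightarrow> poly (char_poly A) (int q ^ (l - 1)) = 0)"
proof -
  let ?P = "(\<Prod>i<l. [:- (int q ^ i), 1:])"
  have q2: "2 \<le> q" unfolding q_def by (rule card_field_ge2)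
  have l0: "l > 0" unfolding l_def by simp
  then have lS: "l = Suc (l - 1)" by simp
  have coeffP: "coeff ?P (l - 1) = - (\<Sum>i<l. int q ^ i)"
    using coeff_prod_lin[of "\<lambda>i. int q ^ i" "l - 1"] lS by (metis (no_types, lifting))
  have gs: "(q ^ l - 1) div (q - 1) = (\<Sum>i<l. q ^ i)" using gsum_nat[OF q2] .
  have c2b: "card B = (q ^ l - 1) div (q - 1)" if arrB: "arrangement B" and cB: "char_poly B = ?P"
    for B :: "('a ^ 'n) set set"
  proof -
    have "- int (card B) = - (\<Sum>i<l. int q ^ i)"
      using coeff_char[OF arrB] coeffP cB unfolding l_def by simp
    then have "int (card B) = int (\<Sum>i<l. q ^ i)" by simp
    then show ?thesis using gs by (simp only: of_nat_eq_iff)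
  qed
  have a2c: "A = A_all \<Longrightarrow> char_poly A = ?P" using char_all unfolding q_def l_def by simp
  have cardAll: "card (A_all :: ('a^'n) set set) = (q ^ l - 1) div (q - 1)"
    using c2b[OF arr_all] char_all unfolding q_def l_def by simp
  have b2a: "A = A_all" if "card A = (q ^ l - 1) div (q - 1)"
  proof -
    have "A \<subseteq> A_all" using assms(1) unfolding arrangement_def A_all_def by blast
    moreover have "finite (A_all :: ('a^'n) set set)" by simp
    ultimately show ?thesis using card_subset_eq that cardAll by metis
  qed
  have c2d: "poly (char_poly A) (int q ^ (l - 1)) = 0" if "char_poly A = ?P"
  proof -
    have "poly ?P (int q ^ (l - 1)) = (\<Prod>i<l. int q ^ (l - 1) - int q ^ i)" by (simp add: poly_prod)
    also have "\<dots> = 0" using l0 by (intro prod_zero) (auto intro: bexI[of _ "l - 1"])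
    finally show ?thesis using that by simp
  qed
  have d2a: "A = A_all" if "poly (char_poly A) (int q ^ (l - 1)) = 0"
    using dim_ff[OF assms(1)] that unfolding q_def l_def by blast
  show ?thesis
    using a2c c2b[OF assms(1)] b2a c2d d2a by blast
qed

end
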